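(* In the setting of the following context, let $\varepsilon>0$ and take the regularizations $\Omega_{\Delta^{\mathcal Y(x)}}:=F^*_{\varepsilon,\Delta(x)}$ and $\Omega_{\mathcal C(x)}:=F^*_{\varepsilon,\mathcal C(x)}$. Then the alternating updates become $$\mu_i^{(t+1)}=\mathbb E_{\mathbf Z}\Big[\operatorname*{argmin}_{y_i\in\mathcal Y(x_i)}c(x_i,y_i,\xi_i)-\kappa\big(\varphi_{\bar w^{(t)}}(x_i)+\varepsilon\mathbf Z\big)^\top y_i\Big],$$ $$\bar w^{(t+1)}\in\operatorname*{argmin}_{w}\frac1N\sum_{i=1}^NF_{\varepsilon,\mathcal C(x_i)}\big(\varphi_w(x_i)\big)-\langle\varphi_w(x_i)|\mu_i^{(t+1)}\rangle,$$ where $\mathbf Z$ is standard multivariate normal, $\mu_i^{(t+1)}=Y(x_i)q_i^{(t+1)}$ (the expectation under $q_i^{(t+1)}$), and $\mu_i^{(t+1)}\in\mathcal C(x_i)$.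
   Context: Contexts $x_1,\dots,x_N$, noises $\xi_1,\dots,\xi_N$, cost $c(x,y,\xi)$, $\kappa>0$. For each $i$, $\mathcal Y(x_i)\subset\mathbb R^{d(x_i)}$ is finite with no element a strict convex combination of others, $Y(x_i)$ is the matrix with columns $y\in\mathcal Y(x_i)$, $\mathcal C(x_i)=\operatorname{conv}(\mathcal Y(x_i))$, $\gamma_i=(c(x_i,y,\xi_i))_{y\in\mathcal Y(x_i)}$, $\Delta^{\mathcal Y(x_i)}$ the probability simplex indexed by $\mathcal Y(x_i)$. With $\mathbf Z$ standard normal on $\mathbb R^{d(x)}$: $F_{\varepsilon,\mathcal C(x)}(\theta)=\mathbb E[\max_{y\in\mathcal Y(x)}(\theta+\varepsilon\mathbf Z)^\top y]$ and $F_{\varepsilon,\Delta(x)}(s)=\mathbb E[\max_{y\in\mathcal Y(x)}s(y)+\varepsilon\mathbf Z^\top y]$ for $s\in\mathbb R^{\mathcal Y(x)}$; ${}^*$ is Fenchel conjugation. $\varphi_w$ ($w\in\mathcal W$) is a statistical model with $\varphi_w(x_i)\in\mathbb R^{d(x_i)}$. With Fenchel–Young loss $\mathcal L_\Omega(s;q)=\Omega(q)+\Omega^*(s)-\langle s|q\rangle$, $S(s,q;x_i,\xi_i)=\langle\gamma_i|q\rangle+\kappa\mathcal L_{\Omega_{\Delta^{\mathcal Y(x_i)}}}(s;q)$ and $\mathcal S_N(s_\otimes,q_\otimes)=\frac1N\sum_iS(s_i,q_i;x_i,\xi_i)$. The alternating updates, started at $\bar w^{(0)}$, are $q_\otimes^{(t+1)}=\operatorname{argmin}_{q_\otimes\in\prod_i\Delta^{\mathcal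 Y(x_i)}}\mathcal S_N((Y(x_i)^\top\varphi_{\bar w^{(t)}}(x_i))_i,q_\otimes)$ and $\bar w^{(t+1)}\in\operatorname{argmin}_w\mathcal S_N((Y(x_i)^\top\varphi_w(x_i))_i,q_\otimes^{(t+1)})$, equivalently $\bar w^{(t+1)}\in\operatorname{argmin}_w\frac1N\sum_i\mathcal L_{\Omega_{\mathcal C(x_i)}}(\varphi_w(x_i);Y(x_i)q_i^{(t+1)})$. *)

theory Defs
  imports "HOL-Probability.Probability"
begin

text \<open>Vectors of R^d are modelled as functions nat \<Rightarrow> real vanishing outside
  {..<d}; elements of R^{Y} (vectors indexed by a finite set Y of such vectors)
  are modelled as functions (nat \<Rightarrow> real) \<Rightarrow> real vanishing outside Y.\<close>
type_synonym vec = "nat \<Rightarrow> real"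

definition Rd :: "nat \<Rightarrow> vec set" where
  "Rd d = {v. \<forall>j. d \<le> j \<longrightarrow> v j = 0}"

definition ipd :: "nat \<Rightarrow> vec \<Rightarrow> vec \<Rightarrow> real" where
  "ipd d u v = (\<Sum>j<d. u j * v j)"

definition RY :: "vec set \<Rightarrow> (vec \<Rightarrow> real) set" where
  "RY Y = {s. \<forall>y. y \<notin> Y \<longrightarrow> s y = 0}"

definition ipY :: "vec set \<Rightarrow> (vec \<Rightarrow> real) \<Rightarrow> (vec \<Rightarrow> real) \<Rightarrow> real" where
  "ipY Y s q = (\<Sum>y\<in>Y. s y * q y)"

definition simplexY :: "vec set \<Rightarrow> (vec \<Rightarrow> real) set" where
  "simplexY Y = {q \<in> RY Y. (\<forall>y. 0 \<le> q y) \<and> sum q Y = 1}"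

definition matY :: "vec set \<Rightarrow> (vec \<Rightarrow> real) \<Rightarrow> vec" where
  "matY Y q = (\<lambda>j. \<Sum>y\<in>Y. q y * y j)"

definition matYT :: "nat \<Rightarrow> vec set \<Rightarrow> vec \<Rightarrow> (vec \<Rightarrow> real)" where
  "matYT d Y \<theta> = (\<lambda>y. if y \<in> Y then ipd d \<theta> y else 0)"

definition convY :: "vec set \<Rightarrow> vec set" where
  "convY Y = matY Y ` simplexY Y"

definition gauss :: "nat \<Rightarrow> vec measure" where
  "gauss d = PiM {..<d} (\<lambda>_. density lborel std_normal_density)"

definition F_C :: "real \<Rightarrow> nat \<Rightarrow> vec set \<Rightarrow> vec \<Rightarrow> real" where
  "F_C \<epsilon> d Y \<theta> = (\<integral>Z. Max ((\<lambda>y. ipd d (\<lambda>j. \<theta> j + \<epsilon> * Z j) y) ` Y) \<partial>gauss d)"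

definition F_Delta :: "real \<Rightarrow> nat \<Rightarrow> vec set \<Rightarrow> (vec \<Rightarrow> real) \<Rightarrow> real" where
  "F_Delta \<epsilon> d Y s = (\<integral>Z. Max ((\<lambda>y. s y + \<epsilon> * ipd d Z y) ` Y) \<partial>gauss d)"

definition fconj :: "'v set \<Rightarrow> ('v \<Rightarrow> 'v \<Rightarrow> real) \<Rightarrow> ('v \<Rightarrow> ereal) \<Rightarrow> 'v \<Rightarrow> ereal" where
  "fconj A ip f s = (SUP q\<in>A. ereal (ip s q) - f q)"

definition FY_loss :: "'v set \<Rightarrow> ('v \<Rightarrow> 'v \<Rightarrow> real) \<Rightarrow> ('v \<Rightarrow> ereal) \<Rightarrow> 'v \<Rightarrow> 'v \<Rightarrow> ereal" where
  "FY_loss A ip \<Omega> s q = \<Omega> q + fconj A ip \<Omega> s - ereal (ip s q)"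

definition Omega_Delta :: "real \<Rightarrow> nat \<Rightarrow> vec set \<Rightarrow> (vec \<Rightarrow> real) \<Rightarrow> ereal" where
  "Omega_Delta \<epsilon> d Y = fconj (RY Y) (ipY Y) (\<lambda>s. ereal (F_Delta \<epsilon> d Y s))"

definition Omega_C :: "real \<Rightarrow> nat \<Rightarrow> vec set \<Rightarrow> vec \<Rightarrow> ereal" where
  "Omega_C \<epsilon> d Y = fconj (Rd d) (ipd d) (\<lambda>\<theta>. ereal (F_C \<epsilon> d Y \<theta>))"

definition S_loss :: "real \<Rightarrow> real \<Rightarrow> ('x \<Rightarrow> vec \<Rightarrow> 'n \<Rightarrow> real) \<Rightarrow> ('x \<Rightarrow> nat) \<Rightarrow> ('x \<Rightarrow> vec set)
    \<Rightarrow> (vec \<Rightarrow> real) \<Rightarrow> (vec \<Rightarrow> real) \<Rightarrow> 'x \<Rightarrow> 'n \<Rightarrow> ereal" where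
  "S_loss \<epsilon> \<kappa> c d Ycal s q x \<xi> =
     ereal (ipY (Ycal x) (\<lambda>y. c x y \<xi>) q)
     + ereal \<kappa> * FY_loss (RY (Ycal x)) (ipY (Ycal x)) (Omega_Delta \<epsilon> (d x) (Ycal x)) s q"

definition S_N :: "real \<Rightarrow> real \<Rightarrow> ('x \<Rightarrow> vec \<Rightarrow> 'n \<Rightarrow> real) \<Rightarrow> ('x \<Rightarrow> nat) \<Rightarrow> ('x \<Rightarrow> vec set)
    \<Rightarrow> nat \<Rightarrow> (nat \<Rightarrow> 'x) \<Rightarrow> (nat \<Rightarrow> 'n)
    \<Rightarrow> (nat \<Rightarrow> vec \<Rightarrow> real) \<Rightarrow> (nat \<Rightarrow> vec \<Rightarrow> real) \<Rightarrow> ereal" where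
  "S_N \<epsilon> \<kappa> c d Ycal N x \<xi> s q =
     ereal (1 / real N) * (\<Sum>i\<in>{1..N}. S_loss \<epsilon> \<kappa> c d Ycal (s i) (q i) (x i) (\<xi> i))"

definition argmins :: "('a \<Rightarrow> 'b::linorder) \<Rightarrow> 'a set \<Rightarrow> 'a set" where
  "argmins f A = {a \<in> A. \<forall>b\<in>A. f a \<le> f b}"

end

theory Submission
  imports Defs
begin
abbreviation "NN \<equiv> density lborel (\<lambda>x. ennreal (std_normal_density x))"

lemma prob_NN: "prob_space NN"
  using prob_space_normal_density[of 1 0] by simp

lemma pps: "product_prob_space (\<lambda>_. NN)"
  unfolding product_prob_space_def product_prob_space_axioms_def product_sigma_finite_def
  using prob_NN prob_space_imp_sigma_finite by blast

lemma gauss_eq: "gauss d = PiM {..<d} (\<lambda>_. NN)"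
  unfolding gauss_def by simp

lemma prob_gauss: "prob_space (gauss d)"
  unfolding gauss_eq
  by (rule prob_space_PiM) (rule prob_NN)

lemma meas_comp[measurable]: "k < d \<Longrightarrow> (\<lambda>Z. Z k) \<in> borel_measurable (gauss d)"
  unfolding gauss_eq by (rule measurable_compose[OF measurable_component_singleton]) (auto simp: measurable_density_eq1)

lemma int_NN_id: "integrable NN (\<lambda>x. x)"
proof -
  have "integrable lborel (\<lambda>x. std_normal_density x * x^1)"
    by (rule integrable_std_normal_moment)
  then show ?thesis
    by (subst integrable_density) (auto simp: normal_density_nonneg)
qed

lemma int_comp: "k < d \<Longrightarrow> integrable (gauss d) (\<lambda>Z. Z k)"
proof -
  assume k: "k < d"
  have "distr (gauss d) NN (\<lambda>Z. Z k) = NN"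
    unfolding gauss_eq by (rule product_prob_space.PiM_component[OF pps]) (use k in auto)
  then have "integrable (distr (gauss d) NN (\<lambda>Z. Z k)) (\<lambda>x. x)" using int_NN_id by simp
  then show ?thesis
    by (subst (asm) integrable_distr_eq) (use k meas_comp[of k d] in \<open>auto simp: gauss_eq measurable_density_eq1 intro: measurable_component_singleton\<close>)
qed

lemma meas_ipd[measurable]: "(\<lambda>Z. ipd d Z y) \<in> borel_measurable (gauss d)"
  unfolding ipd_def by measurable

lemma int_ipd: "integrable (gauss d) (\<lambda>Z. ipd d Z y)"
  unfolding ipd_def
proof (rule Bochner_Integration.integrable_sum)
  fix j assume "j \<in> {..<d}"
  then have "integrable (gauss d) (\<lambda>Z. Z j)" by (intro int_comp) auto
  then show "integrable (gauss d) (\<lambda>Z. Z j * y j)" by simp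
qed

lemma arg_min_on_eq: "arg_min_on f Y = (SOME x. x \<in> {x\<in>Y. \<forall>y\<in>Y. f x \<le> f y})"
  for f :: "'a \<Rightarrow> real"
  unfolding arg_min_on_def arg_min_def is_arg_min_def
  by (rule arg_cong[where f=Eps]) (auto simp: not_less)

lemma sel_meas:
  fixes f :: "vec \<Rightarrow> 'a \<Rightarrow> real"
  assumes Y: "finite Y" "Y \<noteq> {}" and f: "\<And>y. y \<in> Y \<Longrightarrow> (\<lambda>Z. f y Z) \<in> borel_measurable M"
  shows "(\<lambda>Z. arg_min_on (\<lambda>y. f y Z) Y) \<in> measurable M (count_space Y)"
proof (subst measurable_count_space_eq2[OF Y(1)], intro conjI ballI)
  show "(\<lambda>Z. arg_min_on (\<lambda>y. f y Z) Y) \<in> space M \<rightarrow> Y"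
    using arg_min_if_finite(1)[OF Y] by auto
  fix a assume a: "a \<in> Y"
  have "(\<lambda>Z. arg_min_on (\<lambda>y. f y Z) Y) -` {a} \<inter> space M =
     {Z \<in> space M. \<exists>B\<in>Pow Y. (SOME x. x \<in> B) = a \<and> (\<forall>x\<in>Y. (x \<in> B \<longleftrightarrow> (\<forall>y\<in>Y. f x Z \<le> f y Z)))}"
    (is "?L = ?R")
  proof
    show "?L \<subseteq> ?R"
    proof
      fix Z assume "Z \<in> ?L"
      then show "Z \<in> ?R"
        by (intro CollectI conjI bexI[of _ "{x\<in>Y. \<forall>y\<in>Y. f x Z \<le> f y Z}"])
          (auto simp: arg_min_on_eq)
    qed
    show "?R \<subseteq> ?L"
    proof
      fix Z assume "Z \<in> ?R"
      then obtain B where B: "B \<subseteq> Y" "(SOME x. x \<in> B) = a" "\<forall>x\<in>Y. (x \<in> B \<longleftrightarrow> (\<forall>y\<in>Y. f x Z \<le> f y Z))"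
        and Z: "Z \<in> space M" by auto
      then have "B = {x\<in>Y. \<forall>y\<in>Y. f x Z \<le> f y Z}" by auto
      with B Z show "Z \<in> ?L" by (auto simp: arg_min_on_eq)
    qed
  qed
  also have "\<dots> \<in> sets M"
  proof -
    have fp: "finite (Pow Y)" using Y by simp
    have p1: "Measurable.pred M (\<lambda>Z. \<forall>y\<in>Y. f x Z \<le> f y Z)" if "x \<in> Y" for x
    proof (rule pred_intros_finite(3)[OF Y(1)])
      fix y assume "y \<in> Y"
      then have [measurable]: "(\<lambda>Z. f x Z) \<in> borel_measurable M" "(\<lambda>Z. f y Z) \<in> borel_measurable M"
        using f that by auto
      show "Measurable.pred M (\<lambda>Z. f x Z \<le> f y Z)" by measurable
    qed
    have "Measurable.pred M (\<lambda>Z. (SOME x. x \<in> B) = a \<and> (\<forall>x\<in>Y. (x \<in> B \<longleftrightarrow> (\<forall>y\<in>Y. f x Z \<le> f y Z))))" for B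
      using p1 Y(1) by measurable
    then show ?thesis using fp by measurable
  qed
  finally show "(\<lambda>Z. arg_min_on (\<lambda>y. f y Z) Y) -` {a} \<inter> space M \<in> sets M" .
qed

lemma psf: "product_sigma_finite (\<lambda>_. NN)"
  using pps unfolding product_prob_space_def by blast

lemma NN_single: "emeasure NN {p} = 0"
proof -
  have "{p} \<in> null_sets lborel" by (rule finite_imp_null_set_lborel) simp
  then have "(\<integral>\<^sup>+ x. ennreal (std_normal_density x) * indicator {p} x \<partial>lborel) = 0"
    by (rule nn_integral_null_set)
  then show ?thesis by (subst emeasure_density) auto
qed

lemma ties_null:
  assumes j: "j < d" and vj: "v j \<noteq> 0"
  shows "emeasure (gauss d) {Z\<in>space (gauss d). ipd d Z v = c} = 0"
proof -
  interpret product_sigma_finite "\<lambda>_. NN" by (rule psf)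
  define I where "I = {..<d} - {j}"
  have dI: "{..<d} = insert j I" "finite I" "j \<notin> I" using j by (auto simp: I_def)
  define S where "S = {Z\<in>space (gauss d). ipd d Z v = c}"
  have S: "S \<in> sets (gauss d)" unfolding S_def by measurable
  have "emeasure (gauss d) S = (\<integral>\<^sup>+ Z. indicator S Z \<partial>gauss d)"
    using S by simp
  also have "\<dots> = (\<integral>\<^sup>+ x. (\<integral>\<^sup>+ y. indicator S (x(j := y)) \<partial>NN) \<partial>(PiM I (\<lambda>_. NN)))"
    unfolding gauss_eq dI(1)
    by (rule product_nn_integral_insert[OF dI(2,3)]) (use S in \<open>simp add: gauss_eq dI(1)\<close>)
  also have "\<dots> = (\<integral>\<^sup>+ x. 0 \<partial>(PiM I (\<lambda>_. NN)))"
  proof (rule nn_integral_cong)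
    fix x assume x: "x \<in> space (PiM I (\<lambda>_. NN))"
    define p where "p = (c - (\<Sum>k\<in>I. x k * v k)) / v j"
    have "indicator S (x(j := y)) = (indicator {p} y :: ennreal)" for y
    proof -
      have sp: "x(j := y) \<in> space (gauss d)"
        using x unfolding gauss_eq dI(1) by (auto simp: space_PiM PiE_iff extensional_def)
      have "ipd d (x(j := y)) v = (\<Sum>k\<in>I. x k * v k) + y * v j"
        unfolding ipd_def dI(1) using dI(2,3)
        by (simp add: sum.insert_remove) (intro sum.cong refl, auto)
      then have "(x(j := y) \<in> S) = (y = p)"
        using sp vj unfolding S_def p_def by (auto simp: field_simps)
      then show ?thesis by (auto simp: indicator_def)
    qed
    then show "(\<integral>\<^sup>+ y. indicator S (x(j := y)) \<partial>NN) = 0"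
      using NN_single[of p] by (simp add: sets_density)
  qed
  also have "\<dots> = 0" by simp
  finally show ?thesis unfolding S_def .
qed

locale gset =
  fixes d :: nat and Y :: "vec set" and \<epsilon> :: real
  assumes fin: "finite Y" and ne: "Y \<noteq> {}" and dim: "Y \<subseteq> Rd d" and eps: "\<epsilon> > 0"
begin

abbreviation "G \<equiv> gauss d"

sublocale P: prob_space G by (rule prob_gauss)

definition is_sel :: "(vec \<Rightarrow> real) \<Rightarrow> (vec \<Rightarrow> vec) \<Rightarrow> bool" where
  "is_sel s sel \<longleftrightarrow> sel \<in> measurable G (count_space Y) \<and>
     (\<forall>Z\<in>space G. \<forall>y\<in>Y. s y + \<epsilon> * ipd d Z y \<le> s (sel Z) + \<epsilon> * ipd d Z (sel Z))"

definition pr :: "(vec \<Rightarrow> vec) \<Rightarrow> vec \<Rightarrow> real" where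
  "pr sel y = (if y \<in> Y then measure G {Z\<in>space G. sel Z = y} else 0)"

lemma sel_in: "sel \<in> measurable G (count_space Y) \<Longrightarrow> Z \<in> space G \<Longrightarrow> sel Z \<in> Y"
  using measurable_space[of sel G "count_space Y" Z] by simp

lemma sel_sets: "sel \<in> measurable G (count_space Y) \<Longrightarrow> {Z\<in>space G. sel Z = y} \<in> sets G"
proof -
  assume m: "sel \<in> measurable G (count_space Y)"
  have "{Z\<in>space G. sel Z = y} = sel -` {y} \<inter> space G" by auto
  moreover have "sel -` {y} \<inter> space G \<in> sets G"
  proof (cases "y \<in> Y")
    case True then show ?thesis using m unfolding measurable_count_space_eq2[OF fin] by blast
  next
    case False then have "sel -` {y} \<inter> space G = {}" using sel_in[OF m] by auto
    then show ?thesis by simp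
  qed
  ultimately show ?thesis by simp
qed

lemma int_sel_gen:
  fixes h :: "vec \<Rightarrow> vec \<Rightarrow> real"
  assumes m: "sel \<in> measurable G (count_space Y)" and h: "\<And>y. y \<in> Y \<Longrightarrow> integrable G (h y)"
  shows "integrable G (\<lambda>Z. h (sel Z) Z)"
    "(\<integral>Z. h (sel Z) Z \<partial>G) = (\<Sum>y\<in>Y. \<integral>Z. h y Z * indicator {Z\<in>space G. sel Z = y} Z \<partial>G)"
proof -
  have eq: "h (sel Z) Z = (\<Sum>y\<in>Y. h y Z * indicator {Z\<in>space G. sel Z = y} Z)" if "Z \<in> space G" for Z
  proof -
    have "(\<Sum>y\<in>Y. h y Z * indicator {Z\<in>space G. sel Z = y} Z) = (\<Sum>y\<in>Y. if sel Z = y then h y Z else 0)"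
      using that by (intro sum.cong) (auto simp: indicator_def)
    also have "\<dots> = h (sel Z) Z" using sel_in[OF m that] by (subst sum.delta'[OF fin]) simp
    finally show ?thesis by simp
  qed
  have int: "integrable G (\<lambda>Z. \<Sum>y\<in>Y. h y Z * indicator {Z\<in>space G. sel Z = y} Z)"
    by (intro Bochner_Integration.integrable_sum integrable_real_mult_indicator sel_sets[OF m] h)
  have "integrable G (\<lambda>Z. h (sel Z) Z) \<longleftrightarrow> integrable G (\<lambda>Z. \<Sum>y\<in>Y. h y Z * indicator {Z\<in>space G. sel Z = y} Z)"
    by (rule Bochner_Integration.integrable_cong) (auto simp: eq)
  then show "integrable G (\<lambda>Z. h (sel Z) Z)" using int by simp
  have "(\<integral>Z. h (sel Z) Z \<partial>G) = (\<integral>Z. (\<Sum>y\<in>Y. h y Z * indicator {Z\<in>space G. sel Z = y} Z) \<partial>G)"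
    by (intro Bochner_Integration.integral_cong) (auto simp: eq)
  also have "\<dots> = (\<Sum>y\<in>Y. \<integral>Z. h y Z * indicator {Z\<in>space G. sel Z = y} Z \<partial>G)"
    by (intro Bochner_Integration.integral_sum integrable_real_mult_indicator sel_sets[OF m] h)
  finally show "(\<integral>Z. h (sel Z) Z \<partial>G) = (\<Sum>y\<in>Y. \<integral>Z. h y Z * indicator {Z\<in>space G. sel Z = y} Z \<partial>G)" .
qed

lemma int_sel_const:
  assumes m: "sel \<in> measurable G (count_space Y)"
  shows "integrable G (\<lambda>Z. c (sel Z))" "(\<integral>Z. c (sel Z) \<partial>G) = (\<Sum>y\<in>Y. c y * pr sel y)"
proof -
  show "integrable G (\<lambda>Z. c (sel Z))" using int_sel_gen(1)[OF m, of "\<lambda>y Z. c y"] by simp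
  have "(\<integral>Z. c (sel Z) \<partial>G) = (\<Sum>y\<in>Y. \<integral>Z. c y * indicator {Z\<in>space G. sel Z = y} Z \<partial>G)"
    using int_sel_gen(2)[OF m, of "\<lambda>y Z. c y"] by simp
  also have "\<dots> = (\<Sum>y\<in>Y. c y * pr sel y)"
    by (intro sum.cong refl) (simp add: pr_def integral_indicator Int_absorb2)
  finally show "(\<integral>Z. c (sel Z) \<partial>G) = (\<Sum>y\<in>Y. c y * pr sel y)" .
qed

lemma pr_simplex: "sel \<in> measurable G (count_space Y) \<Longrightarrow> pr sel \<in> simplexY Y"
proof -
  assume m: "sel \<in> measurable G (count_space Y)"
  have "(\<Sum>y\<in>Y. 1 * pr sel y) = (\<integral>Z. 1 \<partial>G)" using int_sel_const(2)[OF m, of "\<lambda>_. 1"] by simp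
  then have "sum (pr sel) Y = 1" using prob_space.prob_space[OF prob_gauss] by simp
  then show ?thesis unfolding simplexY_def RY_def by (auto simp: pr_def prob_space.prob_space[OF prob_gauss])
qed

lemma Max_sel:
  assumes "is_sel s sel" "Z \<in> space G"
  shows "Max ((\<lambda>y. s y + \<epsilon> * ipd d Z y) ` Y) = s (sel Z) + \<epsilon> * ipd d Z (sel Z)"
  using assms fin sel_in[of sel Z] unfolding is_sel_def
  by (intro Max_eqI) auto

definition sel0 :: "(vec \<Rightarrow> real) \<Rightarrow> vec \<Rightarrow> vec" where
  "sel0 s = (\<lambda>Z. arg_min_on (\<lambda>y. - (s y + \<epsilon> * ipd d Z y)) Y)"

lemma sel0: "is_sel s (sel0 s)"
  unfolding is_sel_def sel0_def
proof (intro conjI ballI)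
  show "(\<lambda>Z. arg_min_on (\<lambda>y. - (s y + \<epsilon> * ipd d Z y)) Y) \<in> measurable G (count_space Y)"
    by (rule sel_meas[OF fin ne]) measurable
  fix Z y assume "y \<in> Y"
  then show "s y + \<epsilon> * ipd d Z y \<le> s (arg_min_on (\<lambda>y. - (s y + \<epsilon> * ipd d Z y)) Y) +
      \<epsilon> * ipd d Z (arg_min_on (\<lambda>y. - (s y + \<epsilon> * ipd d Z y)) Y)"
  proof -
    let ?a = "arg_min_on (\<lambda>y. - (s y + \<epsilon> * ipd d Z y)) Y"
    have "\<not> (- (s y + \<epsilon> * ipd d Z y) < - (s ?a + \<epsilon> * ipd d Z ?a))"
      using arg_min_if_finite(2)[OF fin ne, of "\<lambda>y. - (s y + \<epsilon> * ipd d Z y)"] \<open>y \<in> Y\<close> by blast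
    then show ?thesis by linarith
  qed
qed

lemma Mx_int_eq:
  assumes "is_sel s sel"
  shows "integrable G (\<lambda>Z. Max ((\<lambda>y. s y + \<epsilon> * ipd d Z y) ` Y))"
    "F_Delta \<epsilon> d Y s = (\<integral>Z. s (sel Z) + \<epsilon> * ipd d Z (sel Z) \<partial>G)"
proof -
  have m: "sel \<in> measurable G (count_space Y)" using assms by (simp add: is_sel_def)
  have i: "integrable G (\<lambda>Z. s (sel Z) + \<epsilon> * ipd d Z (sel Z))"
    using int_sel_gen(1)[OF m, of "\<lambda>y Z. s y + \<epsilon> * ipd d Z y"] int_ipd by simp
  have "integrable G (\<lambda>Z. Max ((\<lambda>y. s y + \<epsilon> * ipd d Z y) ` Y)) \<longleftrightarrow> integrable G (\<lambda>Z. s (sel Z) + \<epsilon> * ipd d Z (sel Z))"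
    by (rule Bochner_Integration.integrable_cong) (auto simp: Max_sel[OF assms])
  then show "integrable G (\<lambda>Z. Max ((\<lambda>y. s y + \<epsilon> * ipd d Z y) ` Y))" using i by simp
  show "F_Delta \<epsilon> d Y s = (\<integral>Z. s (sel Z) + \<epsilon> * ipd d Z (sel Z) \<partial>G)"
    unfolding F_Delta_def by (intro Bochner_Integration.integral_cong) (auto simp: Max_sel[OF assms])
qed

lemma Mx_int: "integrable G (\<lambda>Z. Max ((\<lambda>y. s y + \<epsilon> * ipd d Z y) ` Y))"
  by (rule Mx_int_eq(1)[OF sel0])

lemma subgrad:
  assumes sel: "is_sel s sel"
  shows "F_Delta \<epsilon> d Y z \<ge> F_Delta \<epsilon> d Y s + (\<Sum>y\<in>Y. (z y - s y) * pr sel y)"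
proof -
  have m: "sel \<in> measurable G (count_space Y)" using sel by (simp add: is_sel_def)
  have "F_Delta \<epsilon> d Y z - F_Delta \<epsilon> d Y s =
     (\<integral>Z. Max ((\<lambda>y. z y + \<epsilon> * ipd d Z y) ` Y) - Max ((\<lambda>y. s y + \<epsilon> * ipd d Z y) ` Y) \<partial>G)"
    unfolding F_Delta_def by (rule Bochner_Integration.integral_diff[symmetric]) (rule Mx_int)+
  also have "\<dots> \<ge> (\<integral>Z. z (sel Z) - s (sel Z) \<partial>G)"
  proof (rule integral_mono)
    show "integrable G (\<lambda>Z. z (sel Z) - s (sel Z))" using int_sel_const(1)[OF m, of "\<lambda>y. z y - s y"] by simp
    show "integrable G (\<lambda>Z. Max ((\<lambda>y. z y + \<epsilon> * ipd d Z y) ` Y) - Max ((\<lambda>y. s y + \<epsilon> * ipd d Z y) ` Y))"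
      by (rule Bochner_Integration.integrable_diff; rule Mx_int)
    fix Z assume Z: "Z \<in> space G"
    have "z (sel Z) + \<epsilon> * ipd d Z (sel Z) \<le> Max ((\<lambda>y. z y + \<epsilon> * ipd d Z y) ` Y)"
      using fin sel_in[OF m Z] by (intro Max_ge) auto
    then show "z (sel Z) - s (sel Z) \<le> Max ((\<lambda>y. z y + \<epsilon> * ipd d Z y) ` Y) - Max ((\<lambda>y. s y + \<epsilon> * ipd d Z y) ` Y)"
      using Max_sel[OF sel Z] by simp
  qed
  also have "(\<integral>Z. z (sel Z) - s (sel Z) \<partial>G) = (\<Sum>y\<in>Y. (z y - s y) * pr sel y)"
    using int_sel_const(2)[OF m, of "\<lambda>y. z y - s y"] by simp
  finally show ?thesis by simp
qed

end

context gset begin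

lemma tie_null:
  assumes y: "y \<in> Y" and y0: "y0 \<in> Y" and ne: "y \<noteq> y0"
  shows "{Z\<in>space G. \<theta> y + \<epsilon> * ipd d Z y = \<theta> y0 + \<epsilon> * ipd d Z y0} \<in> null_sets G"
proof -
  have R: "y \<in> Rd d" "y0 \<in> Rd d" using dim y y0 by auto
  have "\<exists>j<d. y j \<noteq> y0 j"
  proof (rule ccontr)
    assume "\<not> (\<exists>j<d. y j \<noteq> y0 j)"
    then have "y k = y0 k" for k using R unfolding Rd_def by (cases "k < d") auto
    then show False using ne by blast
  qed
  then obtain j where j: "j < d" "y j \<noteq> y0 j" by blast
  define v where "v = (\<lambda>k. y k - y0 k)"
  have ipv: "ipd d Z v = ipd d Z y - ipd d Z y0" for Z
    unfolding ipd_def v_def by (simp add: sum_subtractf algebra_simps)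
  have eq: "{Z\<in>space G. \<theta> y + \<epsilon> * ipd d Z y = \<theta> y0 + \<epsilon> * ipd d Z y0} =
      {Z\<in>space G. ipd d Z v = (\<theta> y0 - \<theta> y) / \<epsilon>}"
    using eps by (auto simp: ipv field_simps)
  have "emeasure G {Z\<in>space G. ipd d Z v = (\<theta> y0 - \<theta> y) / \<epsilon>} = 0"
    by (rule ties_null[OF j(1)]) (use j in \<open>simp add: v_def\<close>)
  moreover have "{Z\<in>space G. ipd d Z v = (\<theta> y0 - \<theta> y) / \<epsilon>} \<in> sets G" by measurable
  ultimately show ?thesis unfolding eq by (auto intro: null_setsI)
qed

lemma unique:
  assumes sel: "is_sel \<theta> sel" and q: "q \<in> simplexY Y"
    and sub: "\<And>z. F_Delta \<epsilon> d Y z \<ge> F_Delta \<epsilon> d Y \<theta> + (\<Sum>y\<in>Y. (z y - \<theta> y) * q y)"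
  shows "q = pr sel"
proof -
  have m: "sel \<in> measurable G (count_space Y)" using sel by (simp add: is_sel_def)
  define a where "a y Z = \<theta> y + \<epsilon> * ipd d Z y" for y Z
  have le: "q y0 \<le> pr sel y0" if y0: "y0 \<in> Y" for y0
  proof -
    define A where "A n = {Z\<in>space G. \<forall>y\<in>Y. a y Z \<le> a y0 Z + 1 / Suc n}" for n
    define Ainf where "Ainf = {Z\<in>space G. \<forall>y\<in>Y. a y Z \<le> a y0 Z}"
    have Asets: "A n \<in> sets G" for n
    proof -
      have [measurable]: "(\<lambda>Z. a y Z) \<in> borel_measurable G" for y
        unfolding a_def by measurable
      have "Measurable.pred G (\<lambda>Z. \<forall>y\<in>Y. a y Z \<le> a y0 Z + c)" for c :: real
      proof (rule pred_intros_finite(3)[OF fin])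
        fix y
        have "(\<lambda>Z. a y0 Z + c) \<in> borel_measurable G"
          by (rule borel_measurable_add) (auto simp: a_def)
        then show "Measurable.pred G (\<lambda>Z. a y Z \<le> a y0 Z + c)"
          unfolding pred_def by (intro borel_measurable_le) (auto simp: a_def)
      qed
      then show ?thesis unfolding A_def by measurable
    qed
    have step: "q y0 \<le> measure G (A n)" for n
    proof -
      define t where "t = 1 / real (Suc n)"
      have t: "t > 0" by (simp add: t_def)
      define z where "z = \<theta>(y0 := \<theta> y0 + t)"
      have "(\<Sum>y\<in>Y. (z y - \<theta> y) * q y) = (\<Sum>y\<in>Y. if y = y0 then t * q y0 else 0)"
        by (intro sum.cong) (auto simp: z_def)
      also have "\<dots> = t * q y0" using y0 fin by simp
      finally have "F_Delta \<epsilon> d Y \<theta> + t * q y0 \<le> F_Delta \<epsilon> d Y z" using sub[of z] by simp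
      also have "F_Delta \<epsilon> d Y z = F_Delta \<epsilon> d Y \<theta> +
          (\<integral>Z. Max ((\<lambda>y. z y + \<epsilon> * ipd d Z y) ` Y) - Max ((\<lambda>y. \<theta> y + \<epsilon> * ipd d Z y) ` Y) \<partial>G)"
        unfolding F_Delta_def by (simp add: Bochner_Integration.integral_diff[OF Mx_int Mx_int])
      also have "(\<integral>Z. Max ((\<lambda>y. z y + \<epsilon> * ipd d Z y) ` Y) - Max ((\<lambda>y. \<theta> y + \<epsilon> * ipd d Z y) ` Y) \<partial>G)
          \<le> (\<integral>Z. t * indicator (A n) Z \<partial>G)"
      proof (rule integral_mono)
        show "integrable G (\<lambda>Z. Max ((\<lambda>y. z y + \<epsilon> * ipd d Z y) ` Y) - Max ((\<lambda>y. \<theta> y + \<epsilon> * ipd d Z y) ` Y))"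
          by (rule Bochner_Integration.integrable_diff; rule Mx_int)
        show "integrable G (\<lambda>Z. t * indicator (A n) Z)"
          by (intro integrable_mult_right integrable_real_indicator Asets) (simp add: P.emeasure_eq_measure)
        fix Z assume Z: "Z \<in> space G"
        let ?m = "Max ((\<lambda>y. \<theta> y + \<epsilon> * ipd d Z y) ` Y)"
        have mge: "\<theta> y + \<epsilon> * ipd d Z y \<le> ?m" if "y \<in> Y" for y
          using fin that by (intro Max_ge) auto
        show "Max ((\<lambda>y. z y + \<epsilon> * ipd d Z y) ` Y) - ?m \<le> t * indicator (A n) Z"
        proof (cases "Z \<in> A n")
          case True
          have "Max ((\<lambda>y. z y + \<epsilon> * ipd d Z y) ` Y) \<le> ?m + t"
          proof -
            have "\<forall>y\<in>Y. z y + \<epsilon> * ipd d Z y \<le> ?m + t"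
            proof
              fix y assume y: "y \<in> Y"
              show "z y + \<epsilon> * ipd d Z y \<le> ?m + t"
                using mge[OF y] t by (cases "y = y0") (auto simp: z_def)
            qed
            then show ?thesis using fin ne by (subst Max_le_iff) auto
          qed
          then show ?thesis using True by simp
        next
          case False
          then obtain y1 where y1: "y1 \<in> Y" "a y1 Z > a y0 Z + t"
            using Z unfolding A_def t_def by (auto simp: not_le)
          have "Max ((\<lambda>y. z y + \<epsilon> * ipd d Z y) ` Y) \<le> ?m"
          proof (subst Max_le_iff)
            show "\<forall>b\<in>(\<lambda>y. z y + \<epsilon> * ipd d Z y) ` Y. b \<le> ?m"
            proof
              fix b assume "b \<in> (\<lambda>y. z y + \<epsilon> * ipd d Z y) ` Y"
              then obtain y where y: "y \<in> Y" "b = z y + \<epsilon> * ipd d Z y" by auto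
              show "b \<le> ?m"
              proof (cases "y = y0")
                case True
                then show ?thesis using y y1 mge[of y1] unfolding a_def z_def by auto
              next
                case False
                then show ?thesis using y mge[of y] unfolding z_def by auto
              qed
            qed
          qed (use fin ne in auto)
          then show ?thesis using False by simp
        qed
      qed
      also have "(\<integral>Z. t * indicator (A n) Z \<partial>G) = t * measure G (A n)"
        using Asets by (simp add: integral_indicator Int_absorb2 sets.sets_into_space)
      finally have "t * q y0 \<le> t * measure G (A n)" by simp
      then show ?thesis using t by simp
    qed
    have dec: "decseq A"
      unfolding decseq_def A_def
    proof (intro allI impI subsetI)
      fix m n :: nat and Z assume mn: "m \<le> n" and Z: "Z \<in> {Z\<in>space G. \<forall>y\<in>Y. a y Z \<le> a y0 Z + 1 / Suc n}"
      have "1 / real (Suc n) \<le> 1 / real (Suc m)" using mn by (simp add: frac_le)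
      then show "Z \<in> {Z\<in>space G. \<forall>y\<in>Y. a y Z \<le> a y0 Z + 1 / Suc m}" using Z by force
    qed
    have inter: "(\<Inter>n. A n) = Ainf"
    proof
      show "Ainf \<subseteq> (\<Inter>n. A n)"
        unfolding A_def Ainf_def by (auto intro: order_trans[OF _ add_increasing2[OF _ order_refl]])
      show "(\<Inter>n. A n) \<subseteq> Ainf"
      proof
        fix Z assume Z: "Z \<in> (\<Inter>n. A n)"
        then have Zs: "Z \<in> space G" unfolding A_def by auto
        have "a y Z \<le> a y0 Z" if "y \<in> Y" for y
        proof (rule ccontr)
          assume "\<not> a y Z \<le> a y0 Z"
          then obtain n where "inverse (real (Suc n)) < a y Z - a y0 Z"
            using reals_Archimedean by (metis diff_gt_0_iff_gt not_le)
          moreover have "Z \<in> A n" using Z by auto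
          ultimately show False using that unfolding A_def by (force simp: inverse_eq_divide)
        qed
        then show "Z \<in> Ainf" using Zs unfolding Ainf_def by auto
      qed
    qed
    have lim: "(\<lambda>n. measure G (A n)) \<longlonglongrightarrow> measure G Ainf"
      using P.finite_Lim_measure_decseq[of A] Asets dec inter by auto
    have "q y0 \<le> measure G Ainf"
      by (rule LIMSEQ_le_const[OF lim]) (use step in auto)
    also have "measure G Ainf \<le> measure G {Z\<in>space G. sel Z = y0}"
    proof (rule P.finite_measure_mono_AE)
      define N where "N = (\<Union>y\<in>Y - {y0}. {Z\<in>space G. \<theta> y + \<epsilon> * ipd d Z y = \<theta> y0 + \<epsilon> * ipd d Z y0})"
      have N: "N \<in> null_sets G"
        unfolding N_def using fin y0 by (intro null_sets_UN' countable_finite tie_null) auto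
      show "AE Z\<in>Ainf in G. Z \<in> {Z\<in>space G. sel Z = y0}"
      proof (rule AE_I'[OF N], rule subsetI)
        fix Z assume "Z \<in> {Z \<in> space G. \<not> (Z \<in> Ainf \<longrightarrow> Z \<in> {Z \<in> space G. sel Z = y0})}"
        then have Z: "Z \<in> space G" and A: "Z \<in> Ainf" and ne: "sel Z \<noteq> y0" by auto
        have sY: "sel Z \<in> Y" using sel_in[OF m Z] .
        have "a (sel Z) Z \<le> a y0 Z" using A sY unfolding Ainf_def by auto
        moreover have "a y0 Z \<le> a (sel Z) Z" using sel Z y0 unfolding is_sel_def a_def by auto
        ultimately show "Z \<in> N" unfolding N_def a_def using sY ne Z by auto
      qed
      show "{Z\<in>space G. sel Z = y0} \<in> sets G" by (rule sel_sets[OF m])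
    qed
    also have "\<dots> = pr sel y0" using y0 by (simp add: pr_def)
    finally show ?thesis .
  qed
  have ps: "pr sel \<in> simplexY Y" by (rule pr_simplex[OF m])
  have "(\<Sum>y\<in>Y. pr sel y - q y) = 0"
    using ps q unfolding simplexY_def by (simp add: sum_subtractf)
  then have "\<forall>y\<in>Y. pr sel y - q y = 0"
    using le by (subst (asm) sum_nonneg_eq_0_iff[OF fin]) auto
  then show ?thesis
    using ps q unfolding simplexY_def RY_def by (auto intro!: ext) (metis eq_iff_diff_eq_0)
qed

end

lemma conj_at_subgrad:
  assumes x: "x \<in> A" and sub: "\<And>z. z \<in> A \<Longrightarrow> f z \<ge> f x + ip g z - ip g x"
  shows "fconj A ip (\<lambda>z. ereal (f z)) g = ereal (ip g x - f x)"
  unfolding fconj_def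
proof (rule antisym)
  show "(SUP q\<in>A. ereal (ip g q) - ereal (f q)) \<le> ereal (ip g x - f x)"
  proof (rule SUP_least)
    fix q assume "q \<in> A"
    then show "ereal (ip g q) - ereal (f q) \<le> ereal (ip g x - f x)" using sub[of q] by simp
  qed
  show "ereal (ip g x - f x) \<le> (SUP q\<in>A. ereal (ip g q) - ereal (f q))"
    using x by (intro SUP_upper2[of x]) auto
qed

lemma conj_lower:
  assumes "z \<in> A"
  shows "fconj A ip (\<lambda>z. ereal (f z)) q \<ge> ereal (ip q z - f z)"
  unfolding fconj_def using assms by (intro SUP_upper2[of z]) auto

lemma biconj:
  assumes x: "x \<in> A" and g: "g \<in> A" and sub: "\<And>z. z \<in> A \<Longrightarrow> f z \<ge> f x + ip g z - ip g x"
    and sym: "\<And>a b. ip a b = ip b a"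
  shows "fconj A ip (fconj A ip (\<lambda>z. ereal (f z))) x = ereal (f x)"
proof -
  let ?O = "fconj A ip (\<lambda>z. ereal (f z))"
  show ?thesis unfolding fconj_def[of A ip ?O]
  proof (rule antisym)
    show "(SUP q\<in>A. ereal (ip x q) - ?O q) \<le> ereal (f x)"
    proof (rule SUP_least)
      fix q assume q: "q \<in> A"
      have lo: "?O q \<ge> ereal (ip q x - f x)" by (rule conj_lower[OF x])
      show "ereal (ip x q) - ?O q \<le> ereal (f x)"
      proof (cases "?O q")
        case (real r) then show ?thesis using lo sym[of x q] by simp
      next
        case PInf then show ?thesis by simp
      next
        case MInf then show ?thesis using lo by simp
      qed
    qed
    have "?O g = ereal (ip g x - f x)" by (rule conj_at_subgrad[where f=f and ip=ip and g=g, OF x sub])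
    then have "ereal (ip x g) - ?O g = ereal (f x)" using sym[of x g] by simp
    then show "ereal (f x) \<le> (SUP q\<in>A. ereal (ip x q) - ?O q)"
      using g by (intro SUP_upper2[of g]) auto
  qed
qed

lemma ipd_lin: "ipd d (\<lambda>k. a k + e * Z k) y = ipd d a y + e * ipd d Z y"
  unfolding ipd_def by (simp add: sum.distrib sum_distrib_left algebra_simps)

lemma ipd_sym: "ipd d a b = ipd d b a"
  unfolding ipd_def by (simp add: mult.commute)

lemma ipY_sym: "ipY Y a b = ipY Y b a"
  unfolding ipY_def by (simp add: mult.commute)

lemma matYT_RY: "matYT d Y \<phi> \<in> RY Y"
  unfolding matYT_def RY_def by auto

lemma ipY_matYT: "ipY Y (matYT d Y \<phi>) q = ipd d \<phi> (matY Y q)"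
proof -
  have "ipY Y (matYT d Y \<phi>) q = (\<Sum>y\<in>Y. (\<Sum>j<d. \<phi> j * y j) * q y)"
    unfolding ipY_def matYT_def ipd_def by (intro sum.cong) auto
  also have "\<dots> = (\<Sum>j<d. \<phi> j * (\<Sum>y\<in>Y. q y * y j))"
    by (simp add: sum_distrib_left sum_distrib_right sum.swap[of _ Y] algebra_simps)
  finally show ?thesis unfolding ipd_def matY_def .
qed

lemma F_Delta_matYT: "F_Delta \<epsilon> d Y (matYT d Y \<phi>) = F_C \<epsilon> d Y \<phi>"
  unfolding F_Delta_def F_C_def
  by (intro Bochner_Integration.integral_cong refl arg_cong[where f=Max] image_cong)
     (auto simp: matYT_def ipd_lin)

lemma F_Delta_restrict: "F_Delta \<epsilon> d Y z = F_Delta \<epsilon> d Y (\<lambda>y. if y \<in> Y then z y else 0)"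
  unfolding F_Delta_def
  by (intro Bochner_Integration.integral_cong refl arg_cong[where f=Max] image_cong) auto

context gset begin

lemma FD_sub:
  assumes "is_sel s sel"
  shows "F_Delta \<epsilon> d Y z \<ge> F_Delta \<epsilon> d Y s + ipY Y (pr sel) z - ipY Y (pr sel) s"
proof -
  have "(\<Sum>y\<in>Y. (z y - s y) * pr sel y) = ipY Y (pr sel) z - ipY Y (pr sel) s"
    unfolding ipY_def by (subst sum_subtractf[symmetric]) (intro sum.cong refl, simp add: algebra_simps)
  then show ?thesis using subgrad[OF assms, of z] by simp
qed

lemma simplex_RY: "q \<in> simplexY Y \<Longrightarrow> q \<in> RY Y"
  unfolding simplexY_def by auto

lemma OmD_star:
  assumes "s \<in> RY Y"
  shows "fconj (RY Y) (ipY Y) (Omega_Delta \<epsilon> d Y) s = ereal (F_Delta \<epsilon> d Y s)"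
proof -
  have m: "sel0 s \<in> measurable G (count_space Y)" using sel0[of s] by (simp add: is_sel_def)
  have sub: "\<And>z. z \<in> RY Y \<Longrightarrow> F_Delta \<epsilon> d Y z \<ge> F_Delta \<epsilon> d Y s + ipY Y (pr (sel0 s)) z - ipY Y (pr (sel0 s)) s"
    using FD_sub[OF sel0[of s]] by blast
  show ?thesis unfolding Omega_Delta_def
    by (rule biconj[where f="F_Delta \<epsilon> d Y", OF assms simplex_RY[OF pr_simplex[OF m]] sub ipY_sym])
qed

lemma FC_sub:
  assumes "is_sel (matYT d Y \<phi>) sel"
  shows "F_C \<epsilon> d Y z \<ge> F_C \<epsilon> d Y \<phi> + ipd d (matY Y (pr sel)) z - ipd d (matY Y (pr sel)) \<phi>"
  using FD_sub[OF assms, of "matYT d Y z"]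
  by (simp add: F_Delta_matYT ipY_sym[of Y "pr sel"] ipY_matYT ipd_sym[of d "matY Y (pr sel)"])

lemma matY_Rd: "matY Y q \<in> Rd d"
  unfolding matY_def Rd_def
proof (intro CollectI allI impI)
  fix j assume "d \<le> j"
  then have "\<And>y. y \<in> Y \<Longrightarrow> y j = 0" using dim unfolding Rd_def by auto
  then show "(\<Sum>y\<in>Y. q y * y j) = 0" by (intro sum.neutral) simp
qed

lemma OmC_star:
  assumes "\<phi> \<in> Rd d"
  shows "fconj (Rd d) (ipd d) (Omega_C \<epsilon> d Y) \<phi> = ereal (F_C \<epsilon> d Y \<phi>)"
proof -
  have sub: "\<And>z. z \<in> Rd d \<Longrightarrow> F_C \<epsilon> d Y z \<ge> F_C \<epsilon> d Y \<phi> + ipd d (matY Y (pr (sel0 (matYT d Y \<phi>)))) z - ipd d (matY Y (pr (sel0 (matYT d Y \<phi>)))) \<phi>"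
    using FC_sub[OF sel0] by blast
  show ?thesis unfolding Omega_C_def
    by (rule biconj[where f="F_C \<epsilon> d Y", OF assms matY_Rd sub ipd_sym])
qed

end

locale core = gset +
  fixes \<kappa> :: real and \<gamma> :: "vec \<Rightarrow> real" and \<phi> :: vec
  assumes kappa: "\<kappa> > 0"
begin

definition \<theta> where "\<theta> = (\<lambda>y. if y \<in> Y then ipd d \<phi> y - \<gamma> y / \<kappa> else 0)"
definition selc where "selc = (\<lambda>Z. arg_min_on (\<lambda>y. \<gamma> y - \<kappa> * ipd d (\<lambda>k. \<phi> k + \<epsilon> * Z k) y) Y)"
definition gq where "gq = pr selc"

lemma theta_RY: "\<theta> \<in> RY Y" unfolding \<theta>_def RY_def by auto

lemma selc_sel: "is_sel \<theta> selc"
  unfolding is_sel_def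
proof (intro conjI ballI)
  show "selc \<in> measurable G (count_space Y)"
    unfolding selc_def by (rule sel_meas[OF fin ne]) (simp add: ipd_lin)
  fix Z y assume y: "y \<in> Y"
  let ?a = "selc Z"
  have aY: "?a \<in> Y" unfolding selc_def by (rule arg_min_if_finite(1)[OF fin ne])
  have "\<not> (\<gamma> y - \<kappa> * ipd d (\<lambda>k. \<phi> k + \<epsilon> * Z k) y < \<gamma> ?a - \<kappa> * ipd d (\<lambda>k. \<phi> k + \<epsilon> * Z k) ?a)"
    using arg_min_if_finite(2)[OF fin ne, of "\<lambda>y. \<gamma> y - \<kappa> * ipd d (\<lambda>k. \<phi> k + \<epsilon> * Z k) y"] y
    unfolding selc_def by blast
  then have "\<kappa> * (\<theta> y + \<epsilon> * ipd d Z y) \<le> \<kappa> * (\<theta> ?a + \<epsilon> * ipd d Z ?a)"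
    using y aY kappa by (simp add: \<theta>_def ipd_lin algebra_simps)
  then show "\<theta> y + \<epsilon> * ipd d Z y \<le> \<theta> ?a + \<epsilon> * ipd d Z ?a"
    using kappa by simp
qed

lemma selc_meas: "selc \<in> measurable G (count_space Y)"
  using selc_sel by (simp add: is_sel_def)

lemma gq_simplex: "gq \<in> simplexY Y"
  unfolding gq_def by (rule pr_simplex[OF selc_meas])

lemma OD_gq: "Omega_Delta \<epsilon> d Y gq = ereal (ipY Y gq \<theta> - F_Delta \<epsilon> d Y \<theta>)"
proof -
  have sub: "\<And>z. z \<in> RY Y \<Longrightarrow> F_Delta \<epsilon> d Y z \<ge> F_Delta \<epsilon> d Y \<theta> + ipY Y gq z - ipY Y gq \<theta>"
    unfolding gq_def using FD_sub[OF selc_sel] by blast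
  show ?thesis unfolding Omega_Delta_def
    by (rule conj_at_subgrad[where f="F_Delta \<epsilon> d Y" and ip="ipY Y" and g=gq, OF theta_RY sub])
qed

lemma OD_lower: "Omega_Delta \<epsilon> d Y q \<ge> ereal (ipY Y q z - F_Delta \<epsilon> d Y z)" if "z \<in> RY Y"
  unfolding Omega_Delta_def by (rule conj_lower[OF that])

definition L where "L = \<kappa> * (F_Delta \<epsilon> d Y (matYT d Y \<phi>) - F_Delta \<epsilon> d Y \<theta>)"

definition obj where
  "obj q = ereal (ipY Y \<gamma> q) + ereal \<kappa> * FY_loss (RY Y) (ipY Y) (Omega_Delta \<epsilon> d Y) (matYT d Y \<phi>) q"

lemma alg: "ipY Y q \<theta> = ipY Y (matYT d Y \<phi>) q - ipY Y \<gamma> q / \<kappa>"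
proof -
  have "ipY Y q \<theta> = (\<Sum>y\<in>Y. matYT d Y \<phi> y * q y - \<gamma> y * q y / \<kappa>)"
    unfolding ipY_def by (intro sum.cong refl) (auto simp: \<theta>_def matYT_def algebra_simps)
  also have "\<dots> = ipY Y (matYT d Y \<phi>) q - ipY Y \<gamma> q / \<kappa>"
    unfolding ipY_def by (simp add: sum_subtractf sum_divide_distrib)
  finally show ?thesis .
qed

lemma obj_cases:
  assumes q: "q \<in> simplexY Y"
  shows "obj q \<ge> ereal L" and "obj q = ereal L \<longleftrightarrow> Omega_Delta \<epsilon> d Y q = ereal (ipY Y q \<theta> - F_Delta \<epsilon> d Y \<theta>)"
proof -
  have star: "fconj (RY Y) (ipY Y) (Omega_Delta \<epsilon> d Y) (matYT d Y \<phi>) = ereal (F_Delta \<epsilon> d Y (matYT d Y \<phi>))"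
    by (rule OmD_star[OF matYT_RY])
  have lo: "Omega_Delta \<epsilon> d Y q \<ge> ereal (ipY Y q \<theta> - F_Delta \<epsilon> d Y \<theta>)" by (rule OD_lower[OF theta_RY])
  have kk: "\<kappa> \<noteq> 0" using kappa by simp
  have A: "obj q = ereal (ipY Y \<gamma> q + \<kappa> * (r + F_Delta \<epsilon> d Y (matYT d Y \<phi>) - ipY Y (matYT d Y \<phi>) q))"
    if "Omega_Delta \<epsilon> d Y q = ereal r" for r
    unfolding obj_def FY_loss_def star that by simp
  have B: "ipY Y \<gamma> q + \<kappa> * (r + F_Delta \<epsilon> d Y (matYT d Y \<phi>) - ipY Y (matYT d Y \<phi>) q)
      = L + \<kappa> * (r - (ipY Y q \<theta> - F_Delta \<epsilon> d Y \<theta>))" for r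
    unfolding L_def alg using kk by (simp add: field_simps)
  have "obj q \<ge> ereal L \<and> (obj q = ereal L \<longleftrightarrow> Omega_Delta \<epsilon> d Y q = ereal (ipY Y q \<theta> - F_Delta \<epsilon> d Y \<theta>))"
  proof (cases "Omega_Delta \<epsilon> d Y q")
    case (real r)
    have "r \<ge> ipY Y q \<theta> - F_Delta \<epsilon> d Y \<theta>" using lo real by simp
    then show ?thesis using A[OF real] B[of r] real kappa by (auto simp: mult_le_0_iff)
  next
    case PInf
    then have "obj q = \<infinity>" unfolding obj_def FY_loss_def star using kappa by simp
    then show ?thesis using PInf by simp
  next
    case MInf
    then show ?thesis using lo by simp
  qed
  then show "obj q \<ge> ereal L" and "obj q = ereal L \<longleftrightarrow> Omega_Delta \<epsilon> d Y q = ereal (ipY Y q \<theta> - F_Delta \<epsilon> d Y \<theta>)"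
    by auto
qed

lemma obj_gq: "obj gq = ereal L"
  using obj_cases(2)[OF gq_simplex] OD_gq by simp

lemma argmins_obj: "argmins obj (simplexY Y) = {gq}"
proof
  show "{gq} \<subseteq> argmins obj (simplexY Y)"
    using gq_simplex obj_gq obj_cases(1) unfolding argmins_def by auto
  show "argmins obj (simplexY Y) \<subseteq> {gq}"
  proof
    fix q assume "q \<in> argmins obj (simplexY Y)"
    then have q: "q \<in> simplexY Y" and le: "obj q \<le> obj gq"
      using gq_simplex unfolding argmins_def by auto
    then have "obj q = ereal L" using obj_gq obj_cases(1)[OF q] by simp
    then have eqO: "Omega_Delta \<epsilon> d Y q = ereal (ipY Y q \<theta> - F_Delta \<epsilon> d Y \<theta>)"
      using obj_cases(2)[OF q] by simp
    have sub: "F_Delta \<epsilon> d Y z \<ge> F_Delta \<epsilon> d Y \<theta> + (\<Sum>y\<in>Y. (z y - \<theta> y) * q y)" for z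
    proof -
      define z' where "z' = (\<lambda>y. if y \<in> Y then z y else 0)"
      have z': "z' \<in> RY Y" unfolding z'_def RY_def by auto
      have "ereal (ipY Y q z' - F_Delta \<epsilon> d Y z') \<le> ereal (ipY Y q \<theta> - F_Delta \<epsilon> d Y \<theta>)"
        using OD_lower[OF z', of q] eqO by simp
      moreover have "F_Delta \<epsilon> d Y z = F_Delta \<epsilon> d Y z'" unfolding z'_def by (rule F_Delta_restrict)
      moreover have "(\<Sum>y\<in>Y. (z y - \<theta> y) * q y) = ipY Y q z' - ipY Y q \<theta>"
        unfolding ipY_def z'_def by (subst sum_subtractf[symmetric]) (intro sum.cong refl, simp add: algebra_simps)
      ultimately show ?thesis by simp
    qed
    have "q = pr selc" by (rule unique[OF selc_sel q sub])
    then show "q \<in> {gq}" by (simp add: gq_def)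
  qed
qed

lemma matY_gq: "matY Y gq = (\<lambda>j. \<integral>Z. selc Z j \<partial>G)"
proof
  fix j
  have "(\<integral>Z. selc Z j \<partial>G) = (\<Sum>y\<in>Y. y j * pr selc y)"
    using int_sel_const(2)[OF selc_meas, of "\<lambda>y. y j"] by simp
  then show "matY Y gq j = (\<integral>Z. selc Z j \<partial>G)"
    unfolding matY_def gq_def by (simp add: mult.commute)
qed

definition bD where "bD = ipY Y gq \<theta> - F_Delta \<epsilon> d Y \<theta>"

lemma obj_at:
  "ereal (ipY Y \<gamma> gq) + ereal \<kappa> * FY_loss (RY Y) (ipY Y) (Omega_Delta \<epsilon> d Y) (matYT d Y \<phi>') gq
    = ereal (ipY Y \<gamma> gq + \<kappa> * (bD + F_C \<epsilon> d Y \<phi>' - ipd d \<phi>' (matY Y gq)))"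
  unfolding FY_loss_def OmD_star[OF matYT_RY] OD_gq F_Delta_matYT ipY_matYT bD_def by simp

lemma OC_fin: "\<exists>bC. Omega_C \<epsilon> d Y (matY Y gq) = ereal bC"
proof -
  let ?X = "Omega_C \<epsilon> d Y (matY Y gq)"
  have hi: "?X \<le> ereal bD"
    unfolding Omega_C_def fconj_def
  proof (rule SUP_least)
    fix t assume "t \<in> Rd d"
    have "ereal (ipY Y gq (matYT d Y t) - F_Delta \<epsilon> d Y (matYT d Y t)) \<le> Omega_Delta \<epsilon> d Y gq"
      by (rule OD_lower[OF matYT_RY])
    then show "ereal (ipd d (matY Y gq) t) - ereal (F_C \<epsilon> d Y t) \<le> ereal bD"
      unfolding OD_gq bD_def[symmetric]
      by (simp add: ipY_sym[of Y gq] ipY_matYT F_Delta_matYT ipd_sym[of d "matY Y gq"])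
  qed
  have "(\<lambda>_. 0) \<in> Rd d" unfolding Rd_def by simp
  then have lo: "?X \<ge> ereal (ipd d (matY Y gq) (\<lambda>_. 0) - F_C \<epsilon> d Y (\<lambda>_. 0))"
    unfolding Omega_C_def by (rule conj_lower)
  show ?thesis using hi lo by (cases ?X) auto
qed

definition bC where "bC = (SOME b. Omega_C \<epsilon> d Y (matY Y gq) = ereal b)"

lemma OC_gq: "Omega_C \<epsilon> d Y (matY Y gq) = ereal bC"
  unfolding bC_def using OC_fin by (rule someI_ex)

lemma FYC_at:
  assumes "\<phi>' \<in> Rd d"
  shows "FY_loss (Rd d) (ipd d) (Omega_C \<epsilon> d Y) \<phi>' (matY Y gq)
     = ereal (bC + F_C \<epsilon> d Y \<phi>' - ipd d \<phi>' (matY Y gq))"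
  unfolding FY_loss_def OC_gq OmC_star[OF assms] by simp

end

lemma core_facts:
  fixes \<gamma> :: "vec \<Rightarrow> real" and \<phi> :: vec
  assumes "finite Y" "Y \<noteq> {}" "Y \<subseteq> Rd d" "\<epsilon> > 0" "\<kappa> > 0"
  shows "\<exists>g bD bC L.
    argmins (\<lambda>q. ereal (ipY Y \<gamma> q) + ereal \<kappa> * FY_loss (RY Y) (ipY Y) (Omega_Delta \<epsilon> d Y) (matYT d Y \<phi>) q) (simplexY Y) = {g}
    \<and> ereal (ipY Y \<gamma> g) + ereal \<kappa> * FY_loss (RY Y) (ipY Y) (Omega_Delta \<epsilon> d Y) (matYT d Y \<phi>) g = ereal L
    \<and> matY Y g = (\<lambda>j. \<integral>Z. (arg_min_on (\<lambda>y. \<gamma> y - \<kappa> * ipd d (\<lambda>k. \<phi> k + \<epsilon> * Z k) y) Y) j \<partial>gauss d)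
    \<and> matY Y g \<in> convY Y
    \<and> (\<forall>\<phi>'. ereal (ipY Y \<gamma> g) + ereal \<kappa> * FY_loss (RY Y) (ipY Y) (Omega_Delta \<epsilon> d Y) (matYT d Y \<phi>') g
          = ereal (ipY Y \<gamma> g + \<kappa> * (bD + F_C \<epsilon> d Y \<phi>' - ipd d \<phi>' (matY Y g))))
    \<and> (\<forall>\<phi>'\<in>Rd d. FY_loss (Rd d) (ipd d) (Omega_C \<epsilon> d Y) \<phi>' (matY Y g)
          = ereal (bC + F_C \<epsilon> d Y \<phi>' - ipd d \<phi>' (matY Y g)))"
proof -
  interpret core d Y \<epsilon> \<kappa> \<gamma> \<phi>
    by unfold_locales (use assms in auto)
  show ?thesis
  proof (intro exI conjI allI ballI)
    show "argmins (\<lambda>q. ereal (ipY Y \<gamma> q) + ereal \<kappa> * FY_loss (RY Y) (ipY Y) (Omega_Delta \<epsilon> d Y) (matYT d Y \<phi>) q) (simplexY Y) = {gq}"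
      using argmins_obj unfolding obj_def .
    show "ereal (ipY Y \<gamma> gq) + ereal \<kappa> * FY_loss (RY Y) (ipY Y) (Omega_Delta \<epsilon> d Y) (matYT d Y \<phi>) gq = ereal L"
      using obj_gq unfolding obj_def .
    show "matY Y gq = (\<lambda>j. \<integral>Z. (arg_min_on (\<lambda>y. \<gamma> y - \<kappa> * ipd d (\<lambda>k. \<phi> k + \<epsilon> * Z k) y) Y) j \<partial>gauss d)"
      using matY_gq unfolding selc_def .
    show "matY Y gq \<in> convY Y" unfolding convY_def using gq_simplex by simp
    fix \<phi>' :: vec
    show "ereal (ipY Y \<gamma> gq) + ereal \<kappa> * FY_loss (RY Y) (ipY Y) (Omega_Delta \<epsilon> d Y) (matYT d Y \<phi>') gq
          = ereal (ipY Y \<gamma> gq + \<kappa> * (bD + F_C \<epsilon> d Y \<phi>' - ipd d \<phi>' (matY Y gq)))"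
      by (rule obj_at)
  next
    fix \<phi>' :: vec assume "\<phi>' \<in> Rd d"
    then show "FY_loss (Rd d) (ipd d) (Omega_C \<epsilon> d Y) \<phi>' (matY Y gq)
          = ereal (bC + F_C \<epsilon> d Y \<phi>' - ipd d \<phi>' (matY Y gq))"
      by (rule FYC_at)
  qed
qed

lemma argmins_cong: "(\<And>w. w \<in> W \<Longrightarrow> f w = g w) \<Longrightarrow> argmins f W = argmins g W"
  unfolding argmins_def by auto

lemma argmins_affine:
  assumes "k > 0"
  shows "argmins (\<lambda>w. ereal (c0 + k * R w)) W = argmins R W"
  unfolding argmins_def using assms by auto

lemma ereal_sum_strict:
  fixes a :: ereal
  assumes "a > ereal l" "T \<ge> ereal R"
  shows "a + T > ereal (l + R)"
proof (cases T)
  case (real t)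
  then show ?thesis using assms by (cases a) auto
next
  case PInf
  then show ?thesis using assms by (cases a) auto
next
  case MInf
  then show ?thesis using assms by simp
qed

lemma sum_argmins:
  fixes f :: "nat \<Rightarrow> 'a \<Rightarrow> ereal"
  assumes I: "finite I" and am: "\<And>i. i \<in> I \<Longrightarrow> argmins (f i) (A i) = {a i}"
    and fl: "\<And>i. i \<in> I \<Longrightarrow> f i (a i) = ereal (l i)" and c: "c > 0"
  shows "argmins (\<lambda>q. ereal c * (\<Sum>i\<in>I. f i (q i))) (PiE I A) = {restrict a I}"
proof -
  have aA: "a i \<in> A i" and ge: "\<And>b. b \<in> A i \<Longrightarrow> f i b \<ge> ereal (l i)" if "i \<in> I" for i
  proof -
    have "a i \<in> argmins (f i) (A i)" using am[OF that] by simp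
    then show "a i \<in> A i" "\<And>b. b \<in> A i \<Longrightarrow> f i b \<ge> ereal (l i)"
      using fl[OF that] unfolding argmins_def by auto
  qed
  have gt: "f i b > ereal (l i)" if h: "i \<in> I" "b \<in> A i" "b \<noteq> a i" for i b
  proof -
    have "b \<notin> argmins (f i) (A i)" using am[OF h(1)] h(3) by auto
    then obtain b' where "b' \<in> A i" "f i b' < f i b" using h(2) unfolding argmins_def by (auto simp: not_le)
    then show ?thesis using ge[OF h(1)] by (meson order_le_less_trans)
  qed
  have rA: "restrict a I \<in> PiE I A" using aA by (simp add: restrict_PiE_iff)
  have "(\<Sum>i\<in>I. f i (restrict a I i)) = (\<Sum>i\<in>I. ereal (l i))"
    by (intro sum.cong refl) (simp add: fl)
  then have sr: "(\<Sum>i\<in>I. f i (restrict a I i)) = ereal (\<Sum>i\<in>I. l i)"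
    by (simp add: sum_ereal)
  have sge: "(\<Sum>i\<in>I. f i (q i)) \<ge> ereal (\<Sum>i\<in>I. l i)" if "q \<in> PiE I A" for q
  proof -
    have "(\<Sum>i\<in>I. f i (q i)) \<ge> (\<Sum>i\<in>I. ereal (l i))"
      using that ge by (intro sum_mono) (auto simp: PiE_iff)
    then show ?thesis by (simp add: sum_ereal)
  qed
  have sgt: "(\<Sum>i\<in>I. f i (q i)) > ereal (\<Sum>i\<in>I. l i)" if q: "q \<in> PiE I A" "q \<noteq> restrict a I" for q
  proof -
    have "\<exists>j\<in>I. q j \<noteq> a j"
    proof (rule ccontr)
      assume "\<not> (\<exists>j\<in>I. q j \<noteq> a j)"
      then have "q = restrict a I" using q(1) by (auto simp: PiE_iff extensional_def fun_eq_iff)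
      with q(2) show False by simp
    qed
    then obtain j where j: "j \<in> I" "q j \<noteq> a j" by blast
    have "(\<Sum>i\<in>I. f i (q i)) = f j (q j) + (\<Sum>i\<in>I - {j}. f i (q i))"
      using I j(1) by (simp add: sum.remove)
    moreover have "(\<Sum>i\<in>I - {j}. f i (q i)) \<ge> ereal (\<Sum>i\<in>I - {j}. l i)"
    proof -
      have "(\<Sum>i\<in>I - {j}. f i (q i)) \<ge> (\<Sum>i\<in>I - {j}. ereal (l i))"
        using q(1) ge by (intro sum_mono) (auto simp: PiE_iff)
      then show ?thesis by (simp add: sum_ereal)
    qed
    moreover have "f j (q j) > ereal (l j)" using gt[OF j(1) _ j(2)] q(1) j(1) by (auto simp: PiE_iff)
    moreover have "l j + (\<Sum>i\<in>I - {j}. l i) = (\<Sum>i\<in>I. l i)"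
      using I j(1) by (simp add: sum.remove)
    ultimately show ?thesis using ereal_sum_strict by metis
  qed
  have mono: "ereal c * X < ereal c * Z" if "X < Z" for X Z :: ereal
    using that c by (cases X; cases Z) auto
  show ?thesis
  proof
    show "{restrict a I} \<subseteq> argmins (\<lambda>q. ereal c * (\<Sum>i\<in>I. f i (q i))) (PiE I A)"
    proof -
      have "ereal c * (\<Sum>i\<in>I. f i (restrict a I i)) \<le> ereal c * (\<Sum>i\<in>I. f i (b i))"
        if b: "b \<in> PiE I A" for b
        unfolding sr using sge[OF b] c by (intro ereal_mult_left_mono) auto
      then show ?thesis unfolding argmins_def using rA by blast
    qed
    show "argmins (\<lambda>q. ereal c * (\<Sum>i\<in>I. f i (q i))) (PiE I A) \<subseteq> {restrict a I}"
    proof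
      fix q assume "q \<in> argmins (\<lambda>q. ereal c * (\<Sum>i\<in>I. f i (q i))) (PiE I A)"
      then have q: "q \<in> PiE I A" and all: "\<forall>b\<in>PiE I A. ereal c * (\<Sum>i\<in>I. f i (q i)) \<le> ereal c * (\<Sum>i\<in>I. f i (b i))"
        unfolding argmins_def by auto
      have le: "ereal c * (\<Sum>i\<in>I. f i (q i)) \<le> ereal c * (\<Sum>i\<in>I. f i (restrict a I i))"
        using bspec[OF all rA] .
      show "q \<in> {restrict a I}"
      proof (rule ccontr)
        assume "q \<notin> {restrict a I}"
        then have "(\<Sum>i\<in>I. f i (q i)) > (\<Sum>i\<in>I. f i (restrict a I i))" using sgt[OF q] sr by simp
        then show False using mono le by (meson not_le)
      qed
    qed
  qed
qed

theorem proposition2: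
  fixes \<epsilon> \<kappa> :: real and N :: nat
    and x :: "nat \<Rightarrow> 'x" and \<xi> :: "nat \<Rightarrow> 'n"
    and c :: "'x \<Rightarrow> vec \<Rightarrow> 'n \<Rightarrow> real"
    and d :: "'x \<Rightarrow> nat" and Ycal :: "'x \<Rightarrow> vec set"
    and \<phi> :: "'w \<Rightarrow> 'x \<Rightarrow> vec" and W :: "'w set" and wbar :: 'w
  assumes eps: "\<epsilon> > 0" and kappa: "\<kappa> > 0" and N: "N > 0"
    and Y_fin: "\<And>i. i \<in> {1..N} \<Longrightarrow> finite (Ycal (x i))"
    and Y_ne: "\<And>i. i \<in> {1..N} \<Longrightarrow> Ycal (x i) \<noteq> {}"
    and Y_dim: "\<And>i. i \<in> {1..N} \<Longrightarrow> Ycal (x i) \<subseteq> Rd (d (x i))"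
    and Y_ext: "\<And>i y. i \<in> {1..N} \<Longrightarrow> y \<in> Ycal (x i) \<Longrightarrow> y \<notin> convY (Ycal (x i) - {y})"
    and phi_dim: "\<And>w i. w \<in> W \<Longrightarrow> i \<in> {1..N} \<Longrightarrow> \<phi> w (x i) \<in> Rd (d (x i))"
    and wbar: "wbar \<in> W"
  shows
    "(\<exists>!q. q \<in> argmins
              (S_N \<epsilon> \<kappa> c d Ycal N x \<xi> (\<lambda>i. matYT (d (x i)) (Ycal (x i)) (\<phi> wbar (x i))))
              (PiE {1..N} (\<lambda>i. simplexY (Ycal (x i)))))
     \<and> (\<forall>q \<in> argmins
              (S_N \<epsilon> \<kappa> c d Ycal N x \<xi> (\<lambda>i. matYT (d (x i)) (Ycal (x i)) (\<phi> wbar (x i))))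
              (PiE {1..N} (\<lambda>i. simplexY (Ycal (x i)))).
          (\<forall>i \<in> {1..N}.
             matY (Ycal (x i)) (q i) =
               (\<lambda>j. \<integral>Z. (arg_min_on
                      (\<lambda>y. c (x i) y (\<xi> i) - \<kappa> * ipd (d (x i)) (\<lambda>k. \<phi> wbar (x i) k + \<epsilon> * Z k) y)
                      (Ycal (x i))) j \<partial>gauss (d (x i)))
             \<and> matY (Ycal (x i)) (q i) \<in> convY (Ycal (x i)))
          \<and> argmins (\<lambda>w. S_N \<epsilon> \<kappa> c d Ycal N x \<xi> (\<lambda>i. matYT (d (x i)) (Ycal (x i)) (\<phi> w (x i))) q) W
            = argmins (\<lambda>w. (1 / real N) * (\<Sum>i\<in>{1..N}.
                  F_C \<epsilon> (d (x i)) (Ycal (x i)) (\<phi> w (x i))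
                  - ipd (d (x i)) (\<phi> w (x i)) (matY (Ycal (x i)) (q i)))) W
          \<and> argmins (\<lambda>w. ereal (1 / real N) * (\<Sum>i\<in>{1..N}.
                  FY_loss (Rd (d (x i))) (ipd (d (x i))) (Omega_C \<epsilon> (d (x i)) (Ycal (x i)))
                    (\<phi> w (x i)) (matY (Ycal (x i)) (q i)))) W
            = argmins (\<lambda>w. (1 / real N) * (\<Sum>i\<in>{1..N}.
                  F_C \<epsilon> (d (x i)) (Ycal (x i)) (\<phi> w (x i))
                  - ipd (d (x i)) (\<phi> w (x i)) (matY (Ycal (x i)) (q i)))) W)"
proof -
  define P where "P i g bD bC L \<longleftrightarrow>
    argmins (\<lambda>q. ereal (ipY (Ycal (x i)) (\<lambda>y. c (x i) y (\<xi> i)) q) + ereal \<kappa> * FY_loss (RY (Ycal (x i))) (ipY (Ycal (x i))) (Omega_Delta \<epsilon> (d (x i)) (Ycal (x i))) (matYT (d (x i)) (Ycal (x i)) (\<phi> wbar (x i))) q) (simplexY (Ycal (x i))) = {g}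
    \<and> ereal (ipY (Ycal (x i)) (\<lambda>y. c (x i) y (\<xi> i)) g) + ereal \<kappa> * FY_loss (RY (Ycal (x i))) (ipY (Ycal (x i))) (Omega_Delta \<epsilon> (d (x i)) (Ycal (x i))) (matYT (d (x i)) (Ycal (x i)) (\<phi> wbar (x i))) g = ereal L
    \<and> matY (Ycal (x i)) g = (\<lambda>j. \<integral>Z. (arg_min_on (\<lambda>y. c (x i) y (\<xi> i) - \<kappa> * ipd (d (x i)) (\<lambda>k. \<phi> wbar (x i) k + \<epsilon> * Z k) y) (Ycal (x i))) j \<partial>gauss (d (x i)))
    \<and> matY (Ycal (x i)) g \<in> convY (Ycal (x i))
    \<and> (\<forall>\<phi>'. ereal (ipY (Ycal (x i)) (\<lambda>y. c (x i) y (\<xi> i)) g) + ereal \<kappa> * FY_loss (RY (Ycal (x i))) (ipY (Ycal (x i))) (Omega_Delta \<epsilon> (d (x i)) (Ycal (x i))) (matYT (d (x i)) (Ycal (x i)) \<phi>') g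
          = ereal (ipY (Ycal (x i)) (\<lambda>y. c (x i) y (\<xi> i)) g + \<kappa> * (bD + F_C \<epsilon> (d (x i)) (Ycal (x i)) \<phi>' - ipd (d (x i)) \<phi>' (matY (Ycal (x i)) g))))
    \<and> (\<forall>\<phi>'\<in>Rd (d (x i)). FY_loss (Rd (d (x i))) (ipd (d (x i))) (Omega_C \<epsilon> (d (x i)) (Ycal (x i))) \<phi>' (matY (Ycal (x i)) g)
          = ereal (bC + F_C \<epsilon> (d (x i)) (Ycal (x i)) \<phi>' - ipd (d (x i)) \<phi>' (matY (Ycal (x i)) g)))"
    for i g bD bC L
  have ex: "\<forall>i\<in>{1..N}. \<exists>g bD bC L. P i g bD bC L"
    unfolding P_def by (intro ballI core_facts Y_fin Y_ne Y_dim eps kappa)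
  then obtain GQ BD BC LL where H: "\<And>i. i \<in> {1..N} \<Longrightarrow> P i (GQ i) (BD i) (BC i) (LL i)"
    by metis
  note H1 = H[unfolded P_def, THEN conjunct1]
  note H2 = H[unfolded P_def, THEN conjunct2, THEN conjunct1]
  note H3 = H[unfolded P_def, THEN conjunct2, THEN conjunct2, THEN conjunct1]
  note H4 = H[unfolded P_def, THEN conjunct2, THEN conjunct2, THEN conjunct2, THEN conjunct1]
  note H5 = H[unfolded P_def, THEN conjunct2, THEN conjunct2, THEN conjunct2, THEN conjunct2, THEN conjunct1, rule_format]
  note H6 = H[unfolded P_def, THEN conjunct2, THEN conjunct2, THEN conjunct2, THEN conjunct2, THEN conjunct2, rule_format]
  define Q where "Q = restrict GQ {1..N}"
  have Ni: "1 / real N > 0" using N by simp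
  have am: "argmins (S_N \<epsilon> \<kappa> c d Ycal N x \<xi> (\<lambda>i. matYT (d (x i)) (Ycal (x i)) (\<phi> wbar (x i))))
              (PiE {1..N} (\<lambda>i. simplexY (Ycal (x i)))) = {Q}"
    unfolding S_N_def Q_def
    by (rule sum_argmins[where f="\<lambda>i qi. S_loss \<epsilon> \<kappa> c d Ycal (matYT (d (x i)) (Ycal (x i)) (\<phi> wbar (x i))) qi (x i) (\<xi> i)"
          and l=LL, OF _ _ _ Ni]) (auto simp: S_loss_def H1 H2)
  have QG: "Q i = GQ i" if "i \<in> {1..N}" for i using that by (simp add: Q_def)
  define K where "K i = ipY (Ycal (x i)) (\<lambda>y. c (x i) y (\<xi> i)) (GQ i)" for i
  define h where "h i w = F_C \<epsilon> (d (x i)) (Ycal (x i)) (\<phi> w (x i)) - ipd (d (x i)) (\<phi> w (x i)) (matY (Ycal (x i)) (GQ i))" for i w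
  define R where "R w = (1 / real N) * (\<Sum>i\<in>{1..N}. h i w)" for w
  have R_eq: "(\<lambda>w. (1 / real N) * (\<Sum>i\<in>{1..N}.
                  F_C \<epsilon> (d (x i)) (Ycal (x i)) (\<phi> w (x i))
                  - ipd (d (x i)) (\<phi> w (x i)) (matY (Ycal (x i)) (Q i)))) = R"
    unfolding R_def h_def by (intro ext arg_cong[where f="\<lambda>t. 1 / real N * t"] sum.cong refl) (simp add: QG)
  have eq3: "S_N \<epsilon> \<kappa> c d Ycal N x \<xi> (\<lambda>i. matYT (d (x i)) (Ycal (x i)) (\<phi> w (x i))) Q
      = ereal ((1 / real N) * (\<Sum>i\<in>{1..N}. K i + \<kappa> * BD i) + \<kappa> * R w)" for w
  proof -
    have "(\<Sum>i\<in>{1..N}. S_loss \<epsilon> \<kappa> c d Ycal (matYT (d (x i)) (Ycal (x i)) (\<phi> w (x i))) (Q i) (x i) (\<xi> i))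
        = (\<Sum>i\<in>{1..N}. ereal (K i + \<kappa> * (BD i + h i w)))"
      by (intro sum.cong refl) (simp add: S_loss_def QG H5 K_def h_def)
    also have "\<dots> = ereal (\<Sum>i\<in>{1..N}. K i + \<kappa> * (BD i + h i w))" by (simp add: sum_ereal)
    finally show ?thesis unfolding S_N_def R_def
      by (simp add: sum.distrib sum_distrib_left algebra_simps)
  qed
  have eq4: "ereal (1 / real N) * (\<Sum>i\<in>{1..N}.
                  FY_loss (Rd (d (x i))) (ipd (d (x i))) (Omega_C \<epsilon> (d (x i)) (Ycal (x i)))
                    (\<phi> w (x i)) (matY (Ycal (x i)) (Q i)))
      = ereal ((1 / real N) * (\<Sum>i\<in>{1..N}. BC i) + 1 * R w)" if w: "w \<in> W" for w
  proof -
    have "(\<Sum>i\<in>{1..N}. FY_loss (Rd (d (x i))) (ipd (d (x i))) (Omega_C \<epsilon> (d (x i)) (Ycal (x i)))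
                    (\<phi> w (x i)) (matY (Ycal (x i)) (Q i)))
        = (\<Sum>i\<in>{1..N}. ereal (BC i + h i w))"
      by (intro sum.cong refl) (simp add: QG H6 phi_dim[OF w] h_def)
    also have "\<dots> = ereal (\<Sum>i\<in>{1..N}. BC i + h i w)" by (simp add: sum_ereal)
    finally show ?thesis unfolding R_def
      by (simp add: sum.distrib sum_distrib_left algebra_simps)
  qed
  have main: "(\<forall>i \<in> {1..N}.
             matY (Ycal (x i)) (Q i) =
               (\<lambda>j. \<integral>Z. (arg_min_on
                      (\<lambda>y. c (x i) y (\<xi> i) - \<kappa> * ipd (d (x i)) (\<lambda>k. \<phi> wbar (x i) k + \<epsilon> * Z k) y)
                      (Ycal (x i))) j \<partial>gauss (d (x i)))
             \<and> matY (Ycal (x i)) (Q i) \<in> convY (Ycal (x i)))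
          \<and> argmins (\<lambda>w. S_N \<epsilon> \<kappa> c d Ycal N x \<xi> (\<lambda>i. matYT (d (x i)) (Ycal (x i)) (\<phi> w (x i))) Q) W
            = argmins (\<lambda>w. (1 / real N) * (\<Sum>i\<in>{1..N}.
                  F_C \<epsilon> (d (x i)) (Ycal (x i)) (\<phi> w (x i))
                  - ipd (d (x i)) (\<phi> w (x i)) (matY (Ycal (x i)) (Q i)))) W
          \<and> argmins (\<lambda>w. ereal (1 / real N) * (\<Sum>i\<in>{1..N}.
                  FY_loss (Rd (d (x i))) (ipd (d (x i))) (Omega_C \<epsilon> (d (x i)) (Ycal (x i)))
                    (\<phi> w (x i)) (matY (Ycal (x i)) (Q i)))) W
            = argmins (\<lambda>w. (1 / real N) * (\<Sum>i\<in>{1..N}.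
                  F_C \<epsilon> (d (x i)) (Ycal (x i)) (\<phi> w (x i))
                  - ipd (d (x i)) (\<phi> w (x i)) (matY (Ycal (x i)) (Q i)))) W"
  proof (intro conjI ballI)
    fix i assume i: "i \<in> {1..N}"
    show "matY (Ycal (x i)) (Q i) =
               (\<lambda>j. \<integral>Z. (arg_min_on
                      (\<lambda>y. c (x i) y (\<xi> i) - \<kappa> * ipd (d (x i)) (\<lambda>k. \<phi> wbar (x i) k + \<epsilon> * Z k) y)
                      (Ycal (x i))) j \<partial>gauss (d (x i)))"
      using H3[OF i] QG[OF i] by simp
    show "matY (Ycal (x i)) (Q i) \<in> convY (Ycal (x i))"
      using H4[OF i] QG[OF i] by simp
  next
    show "argmins (\<lambda>w. S_N \<epsilon> \<kappa> c d Ycal N x \<xi> (\<lambda>i. matYT (d (x i)) (Ycal (x i)) (\<phi> w (x i))) Q) W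
            = argmins (\<lambda>w. (1 / real N) * (\<Sum>i\<in>{1..N}.
                  F_C \<epsilon> (d (x i)) (Ycal (x i)) (\<phi> w (x i))
                  - ipd (d (x i)) (\<phi> w (x i)) (matY (Ycal (x i)) (Q i)))) W"
      unfolding R_eq eq3 by (rule argmins_affine[OF kappa])
  next
    have "argmins (\<lambda>w. ereal (1 / real N) * (\<Sum>i\<in>{1..N}.
                  FY_loss (Rd (d (x i))) (ipd (d (x i))) (Omega_C \<epsilon> (d (x i)) (Ycal (x i)))
                    (\<phi> w (x i)) (matY (Ycal (x i)) (Q i)))) W
        = argmins (\<lambda>w. ereal ((1 / real N) * (\<Sum>i\<in>{1..N}. BC i) + 1 * R w)) W"
      by (rule argmins_cong) (rule eq4)
    also have "\<dots> = argmins R W" by (rule argmins_affine) simp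
    finally show "argmins (\<lambda>w. ereal (1 / real N) * (\<Sum>i\<in>{1..N}.
                  FY_loss (Rd (d (x i))) (ipd (d (x i))) (Omega_C \<epsilon> (d (x i)) (Ycal (x i)))
                    (\<phi> w (x i)) (matY (Ycal (x i)) (Q i)))) W
            = argmins (\<lambda>w. (1 / real N) * (\<Sum>i\<in>{1..N}.
                  F_C \<epsilon> (d (x i)) (Ycal (x i)) (\<phi> w (x i))
                  - ipd (d (x i)) (\<phi> w (x i)) (matY (Ycal (x i)) (Q i)))) W"
      unfolding R_eq .
  qed
  show ?thesis
    unfolding am using main by auto
qed

end
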